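(* Let $H$ be a graph. Neither a leaf nor a support vertex of $H$ belongs to a good subgraph of $H$.
   Context: Graphs are finite and may have multiple edges and loops. A leaf is a vertex of degree one; a support vertex is a vertex adjacent to a leaf. Good subgraph: Let $Q$ be a subgraph of $H$ without isolated vertices, and $E_Q^-$ the set of edges of $H$ not in $Q$ incident with at least one vertex of $Q$. $Q$ is a good subgraph of $H$ if there exist a set of edges $E$ with $E_Q^-\subseteq E\subseteq E_H\setminus E_Q$ and an orientation $A_E$ of the edges of $E$ (where $d^+(x)$, $d^-(x)$ denote the numbers of arcs of $A_E$ leaving, resp. entering $x$, and $d_H(x)$ is the degree in $H$) such that the arcs of $A_E$ form a family $\mathcal P=\{P_x: x\in V_Q\}$ of oriented paths indexed by the vertices of $Q$ with: (i) every vertex $v$ of $Q$ is the initial vertex of exactly one path of $\mathcal P$, and $d^+(v)=1$, $d^-(v)=d_H(v)-d_Q(v)-1$; (ii) if $x$ is an inner vertex of a path of $\mathcal P$, then $d^+(x)=1$ and $d^-(x)=d_H(x)-1$; (iii) if $x$ is an end vertex of a path of $\mathcal P$, then $d^-(x)<d_H(x)$. *)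

theory Defs
  imports Main
begin

text \<open>A (finite) multigraph H with loops and multiple edges is given by a vertex set V,
an edge set Ed (abstract edge names) and an endpoint map ends :: 'e \<Rightarrow> 'v \<times> 'v
(the order of the pair carries no meaning).  A loop e has fst (ends e) = snd (ends e).\<close>

definition multigraph :: "'v set \<Rightarrow> 'e set \<Rightarrow> ('e \<Rightarrow> 'v \<times> 'v) \<Rightarrow> bool" where
  "multigraph V Ed ends \<longleftrightarrow> finite V \<and> finite Ed \<and>
     (\<forall>e\<in>Ed. fst (ends e) \<in> V \<and> snd (ends e) \<in> V)"

definition incident :: "('e \<Rightarrow> 'v \<times> 'v) \<Rightarrow> 'e \<Rightarrow> 'v \<Rightarrow> bool" where
  "incident ends e x \<longleftrightarrow> fst (ends e) = x \<or> snd (ends e) = x"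

text \<open>Degree of x in the (sub)graph with edge set Ed; loops count twice.\<close>
definition deg :: "'e set \<Rightarrow> ('e \<Rightarrow> 'v \<times> 'v) \<Rightarrow> 'v \<Rightarrow> nat" where
  "deg Ed ends x = card {e\<in>Ed. fst (ends e) = x} + card {e\<in>Ed. snd (ends e) = x}"

definition leaf :: "'v set \<Rightarrow> 'e set \<Rightarrow> ('e \<Rightarrow> 'v \<times> 'v) \<Rightarrow> 'v \<Rightarrow> bool" where
  "leaf V Ed ends x \<longleftrightarrow> x \<in> V \<and> deg Ed ends x = 1"

definition support_vertex :: "'v set \<Rightarrow> 'e set \<Rightarrow> ('e \<Rightarrow> 'v \<times> 'v) \<Rightarrow> 'v \<Rightarrow> bool" where
  "support_vertex V Ed ends x \<longleftrightarrow> x \<in> V \<and>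
     (\<exists>e\<in>Ed. \<exists>l. leaf V Ed ends l \<and> (ends e = (x, l) \<or> ends e = (l, x)))"

definition subgraph_noiso ::
  "'v set \<Rightarrow> 'e set \<Rightarrow> ('e \<Rightarrow> 'v \<times> 'v) \<Rightarrow> 'v set \<Rightarrow> 'e set \<Rightarrow> bool" where
  "subgraph_noiso V Ed ends VQ EQ \<longleftrightarrow> VQ \<subseteq> V \<and> EQ \<subseteq> Ed \<and>
     (\<forall>e\<in>EQ. fst (ends e) \<in> VQ \<and> snd (ends e) \<in> VQ) \<and>
     (\<forall>v\<in>VQ. \<exists>e\<in>EQ. incident ends e v)"

definition EQminus ::
  "'e set \<Rightarrow> ('e \<Rightarrow> 'v \<times> 'v) \<Rightarrow> 'v set \<Rightarrow> 'e set \<Rightarrow> 'e set" where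
  "EQminus Ed ends VQ EQ = {e \<in> Ed - EQ. \<exists>v\<in>VQ. incident ends e v}"

definition orientation ::
  "'e set \<Rightarrow> ('e \<Rightarrow> 'v \<times> 'v) \<Rightarrow> ('e \<Rightarrow> 'v) \<Rightarrow> ('e \<Rightarrow> 'v) \<Rightarrow> bool" where
  "orientation E ends tail head \<longleftrightarrow>
     (\<forall>e\<in>E. (tail e, head e) = ends e \<or> (head e, tail e) = ends e)"

definition outdeg :: "'e set \<Rightarrow> ('e \<Rightarrow> 'v) \<Rightarrow> 'v \<Rightarrow> nat" where
  "outdeg E tail x = card {e\<in>E. tail e = x}"

definition indeg :: "'e set \<Rightarrow> ('e \<Rightarrow> 'v) \<Rightarrow> 'v \<Rightarrow> nat" where
  "indeg E head x = card {e\<in>E. head e = x}"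

definition pverts :: "('e \<Rightarrow> 'v) \<Rightarrow> 'v \<Rightarrow> 'e list \<Rightarrow> 'v list" where
  "pverts head x es = x # map head es"

definition dipath :: "('e \<Rightarrow> 'v) \<Rightarrow> ('e \<Rightarrow> 'v) \<Rightarrow> 'v \<Rightarrow> 'e list \<Rightarrow> bool" where
  "dipath tail head x es \<longleftrightarrow> distinct (pverts head x es) \<and>
     (\<forall>i<length es. tail (es ! i) = pverts head x es ! i)"

definition inner_vertex :: "('e \<Rightarrow> 'v) \<Rightarrow> 'v \<Rightarrow> 'e list \<Rightarrow> 'v \<Rightarrow> bool" where
  "inner_vertex head x es v \<longleftrightarrow> (\<exists>i. 0 < i \<and> i < length es \<and> pverts head x es ! i = v)"

definition end_vertex :: "('e \<Rightarrow> 'v) \<Rightarrow> 'v \<Rightarrow> 'e list \<Rightarrow> 'v" where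
  "end_vertex head x es = last (pverts head x es)"

definition good_subgraph ::
  "'v set \<Rightarrow> 'e set \<Rightarrow> ('e \<Rightarrow> 'v \<times> 'v) \<Rightarrow> 'v set \<Rightarrow> 'e set \<Rightarrow> bool" where
  "good_subgraph V Ed ends VQ EQ \<longleftrightarrow> subgraph_noiso V Ed ends VQ EQ \<and>
    (\<exists>E tail head P.
       EQminus Ed ends VQ EQ \<subseteq> E \<and> E \<subseteq> Ed - EQ \<and>
       orientation E ends tail head \<and>
       \<comment> \<open>the arcs of A_E are partitioned into the paths P x, x \<in> VQ, P x starting at x\<close>
       (\<forall>x\<in>VQ. dipath tail head x (P x) \<and> set (P x) \<subseteq> E) \<and>
       E = (\<Union>x\<in>VQ. set (P x)) \<and>
       (\<forall>x\<in>VQ. \<forall>y\<in>VQ. x \<noteq> y \<longrightarrow> set (P x) \<inter> set (P y) = {}) \<and>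
       \<comment> \<open>(i)\<close>
       (\<forall>v\<in>VQ. outdeg E tail v = 1 \<and>
          int (indeg E head v) = int (deg Ed ends v) - int (deg EQ ends v) - 1) \<and>
       \<comment> \<open>(ii)\<close>
       (\<forall>x\<in>VQ. \<forall>v. inner_vertex head x (P x) v \<longrightarrow>
          outdeg E tail v = 1 \<and> int (indeg E head v) = int (deg Ed ends v) - 1) \<and>
       \<comment> \<open>(iii)\<close>
       (\<forall>x\<in>VQ. indeg E head (end_vertex head x (P x)) < deg Ed ends (end_vertex head x (P x))))"

end

theory Submission
  imports Defs
begin

lemma card_pos_ex:
  assumes "finite A" "a \<in> A" "P a" shows "card {e\<in>A. P e} \<ge> 1"
proof -
  have "{e\<in>A. P e} \<noteq> {}" using assms by blast
  moreover have "finite {e\<in>A. P e}" using assms by simp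
  ultimately show ?thesis by (simp add: Suc_le_eq card_gt_0_iff)
qed

lemma good_elim:
  assumes "good_subgraph V Ed ends VQ EQ"
  obtains E tail head P where
    "subgraph_noiso V Ed ends VQ EQ"
    "EQminus Ed ends VQ EQ \<subseteq> E" "E \<subseteq> Ed - EQ"
    "orientation E ends tail head"
    "\<forall>x\<in>VQ. dipath tail head x (P x) \<and> set (P x) \<subseteq> E"
    "E = (\<Union>x\<in>VQ. set (P x))"
    "\<forall>x\<in>VQ. \<forall>y\<in>VQ. x \<noteq> y \<longrightarrow> set (P x) \<inter> set (P y) = {}"
    "\<forall>v\<in>VQ. outdeg E tail v = 1 \<and>
          int (indeg E head v) = int (deg Ed ends v) - int (deg EQ ends v) - 1"
    "\<forall>x\<in>VQ. \<forall>v. inner_vertex head x (P x) v \<longrightarrow>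
          outdeg E tail v = 1 \<and> int (indeg E head v) = int (deg Ed ends v) - 1"
    "\<forall>x\<in>VQ. indeg E head (end_vertex head x (P x)) < deg Ed ends (end_vertex head x (P x))"
  using assms unfolding good_subgraph_def
  apply (elim conjE exE)
  apply (rule that)
  apply assumption+
  done

lemma leaf_notin:
  assumes mg: "multigraph V Ed ends"
    and g: "good_subgraph V Ed ends VQ EQ"
    and lf: "leaf V Ed ends x"
  shows "x \<notin> VQ"
proof
  assume xq: "x \<in> VQ"
  have fin: "finite Ed" using mg by (simp add: multigraph_def)
  obtain E tail head P where sg: "subgraph_noiso V Ed ends VQ EQ"
    and "EQminus Ed ends VQ EQ \<subseteq> E" "E \<subseteq> Ed - EQ"
    "orientation E ends tail head"
    "\<forall>x\<in>VQ. dipath tail head x (P x) \<and> set (P x) \<subseteq> E"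
    "E = (\<Union>x\<in>VQ. set (P x))"
    "\<forall>x\<in>VQ. \<forall>y\<in>VQ. x \<noteq> y \<longrightarrow> set (P x) \<inter> set (P y) = {}"
    and dg: "\<forall>v\<in>VQ. outdeg E tail v = 1 \<and>
          int (indeg E head v) = int (deg Ed ends v) - int (deg EQ ends v) - 1"
    and "\<forall>x\<in>VQ. \<forall>v. inner_vertex head x (P x) v \<longrightarrow>
          outdeg E tail v = 1 \<and> int (indeg E head v) = int (deg Ed ends v) - 1"
    "\<forall>x\<in>VQ. indeg E head (end_vertex head x (P x)) < deg Ed ends (end_vertex head x (P x))"
    by (rule good_elim[OF g])
  have sub: "EQ \<subseteq> Ed" and ex: "\<exists>e\<in>EQ. incident ends e x"
    using sg xq unfolding subgraph_noiso_def by blast+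
  have finQ: "finite EQ" using fin sub finite_subset by blast
  have le: "deg EQ ends x \<le> deg Ed ends x"
    unfolding deg_def
    by (intro add_mono card_mono) (use fin sub in auto)
  obtain e where e: "e \<in> EQ" "incident ends e x" using ex by blast
  have "deg EQ ends x \<ge> 1"
  proof (cases "fst (ends e) = x")
    case True
    then show ?thesis using card_pos_ex[OF finQ e(1), of "\<lambda>e. fst (ends e) = x"]
      unfolding deg_def by simp
  next
    case False
    then have "snd (ends e) = x" using e(2) by (simp add: incident_def)
    then show ?thesis using card_pos_ex[OF finQ e(1), of "\<lambda>e. snd (ends e) = x"]
      unfolding deg_def by simp
  qed
  moreover have "deg Ed ends x = 1" using lf by (simp add: leaf_def)
  moreover have
    "int (indeg E head x) = int (deg Ed ends x) - int (deg EQ ends x) - 1"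
    using dg xq by blast
  ultimately show False using le by linarith
qed

theorem mainTheorem6:
  fixes V :: "'v set" and Ed :: "'e set" and ends :: "'e \<Rightarrow> 'v \<times> 'v"
    and VQ :: "'v set" and EQ :: "'e set" and x :: 'v
  assumes "multigraph V Ed ends"
    and "good_subgraph V Ed ends VQ EQ"
    and "leaf V Ed ends x \<or> support_vertex V Ed ends x"
  shows "x \<notin> VQ"
proof
  assume xq: "x \<in> VQ"
  have fin: "finite Ed" using assms(1) by (simp add: multigraph_def)
  show False
  proof (cases "leaf V Ed ends x")
    case True
    then show ?thesis using leaf_notin[OF assms(1,2)] xq by blast
  next
    case False
    then obtain e l where eE: "e \<in> Ed" and lf: "leaf V Ed ends l"
      and en: "ends e = (x, l) \<or> ends e = (l, x)"
      using assms(3) by (auto simp: support_vertex_def)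
    have lnq: "l \<notin> VQ" using leaf_notin[OF assms(1,2) lf] .
    have degl: "deg Ed ends l = 1" using lf by (simp add: leaf_def)
    have eQ: "e \<notin> EQ"
    proof
      assume "e \<in> EQ"
      moreover have "subgraph_noiso V Ed ends VQ EQ"
        using assms(2) unfolding good_subgraph_def by (elim conjE)
      ultimately have "l \<in> VQ" using en
        unfolding subgraph_noiso_def by (metis fst_conv snd_conv)
      then show False using lnq by blast
    qed
    have eM: "e \<in> EQminus Ed ends VQ EQ"
      using eE eQ en xq by (auto simp: EQminus_def incident_def)
    obtain E tail head P where
      h0: "subgraph_noiso V Ed ends VQ EQ" and
      h1: "EQminus Ed ends VQ EQ \<subseteq> E" and h2: "E \<subseteq> Ed - EQ" and
      h3: "orientation E ends tail head" and
      h4: "\<forall>x\<in>VQ. dipath tail head x (P x) \<and> set (P x) \<subseteq> E" and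
      h5: "E = (\<Union>x\<in>VQ. set (P x))" and
      h6: "\<forall>x\<in>VQ. \<forall>y\<in>VQ. x \<noteq> y \<longrightarrow> set (P x) \<inter> set (P y) = {}" and
      h6b: "\<forall>v\<in>VQ. outdeg E tail v = 1 \<and>
          int (indeg E head v) = int (deg Ed ends v) - int (deg EQ ends v) - 1" and
      h7: "\<forall>x\<in>VQ. \<forall>v. inner_vertex head x (P x) v \<longrightarrow>
          outdeg E tail v = 1 \<and> int (indeg E head v) = int (deg Ed ends v) - 1" and
      h8: "\<forall>x\<in>VQ. indeg E head (end_vertex head x (P x)) < deg Ed ends (end_vertex head x (P x))"
      by (rule good_elim[OF assms(2)])
    have finE: "finite E" using h2 fin finite_subset by blast
    have eEE: "e \<in> E" using eM h1 by blast
    have indpos: "indeg E head l \<ge> 1" if "f \<in> E" "head f = l" for f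
      using card_pos_ex[OF finE that(1), of "\<lambda>f. head f = l"] that
      unfolding indeg_def by simp
    have "e \<in> (\<Union>x\<in>VQ. set (P x))" using eEE h5 by simp
    then obtain y where yq: "y \<in> VQ" and ey: "e \<in> set (P y)" by blast
    obtain i where il: "i < length (P y)" and ei: "P y ! i = e"
      using ey by (metis in_set_conv_nth)
    have dp: "dipath tail head y (P y)" and sP: "set (P y) \<subseteq> E" using h4 yq by auto
    have tl: "tail e = pverts head y (P y) ! i"
      using dp il ei by (auto simp: dipath_def)
    have hd: "pverts head y (P y) ! Suc i = head e"
      using il ei by (simp add: pverts_def)
    have "tail e = l \<or> head e = l" using h3 eEE en by (auto simp: orientation_def)
    then show False
    proof
      assume tle: "tail e = l"
      show False
      proof (cases i)
        case 0
        then have "l = y" using tl tle by (simp add: pverts_def)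
        then show False using yq lnq by blast
      next
        case (Suc j)
        have inn: "inner_vertex head y (P y) l"
          unfolding inner_vertex_def using Suc il tl tle by (intro exI[of _ i]) auto
        have "int (indeg E head l) = int (deg Ed ends l) - 1" using h7 yq inn by blast
        then have z: "indeg E head l = 0" using degl by simp
        have "pverts head y (P y) ! i = head (P y ! j)" using Suc il by (simp add: pverts_def)
        moreover have "P y ! j \<in> E" using sP Suc il by (metis Suc_lessD nth_mem subsetD)
        ultimately show False using indpos[of "P y ! j"] z tl tle by simp
      qed
    next
      assume hde: "head e = l"
      have "indeg E head l \<ge> 1" using indpos[OF eEE hde] .
      show False
      proof (cases "Suc i < length (P y)")
        case True
        have inn: "inner_vertex head y (P y) l"
          unfolding inner_vertex_def using True hd hde by (intro exI[of _ "Suc i"]) auto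
        have "int (indeg E head l) = int (deg Ed ends l) - 1" using h7 yq inn by blast
        then show False using degl indpos[OF eEE hde] by simp
      next
        case False
        then have "Suc i = length (P y)" using il by simp
        then have "end_vertex head y (P y) = l"
        proof -
          have ne: "P y \<noteq> []" using il by auto
          have "last (P y) = P y ! i" using ne \<open>Suc i = length (P y)\<close>
            by (metis last_conv_nth diff_Suc_1)
          then show ?thesis using ne hde ei
            by (simp add: end_vertex_def pverts_def last_map)
        qed
        moreover have "indeg E head (end_vertex head y (P y)) < deg Ed ends (end_vertex head y (P y))"
          using h8 yq by blast
        ultimately have "indeg E head l < 1" using degl by simp
        then show False using indpos[OF eEE hde] by simp
      qed
    qed
  qed
qed

end
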